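(* Let $A\in\mathbb{C}^{n\times n}$ with $\mathrm{Ind}(A)=k$, and $m\in\mathbb{N}=\{1,2,\dots\}$. Then the system $$AX=(A^{\mathrm{cEP}})^mA^mP_{A^m},\qquad \mathcal{R}(X)\subseteq\mathcal{R}(A^k)$$ in $X\in\mathbb{C}^{n\times n}$ is consistent and its unique solution is $X=A^{\#_m}$.
   Context: For $A\in\mathbb{C}^{n\times n}$: $A^\dagger$ Moore–Penrose inverse, $P_A=AA^\dagger$, $\mathcal{R}(\cdot)$ column space. The index $\mathrm{Ind}(A)$ is the smallest nonnegative integer $k$ with $\mathcal{R}(A^k)=\mathcal{R}(A^{k+1})$ ($A^0=I_n$). The core-EP inverse $A^{\mathrm{cEP}}$ is the unique $X$ with $XAX=X$ and $\mathcal{R}(X)=\mathcal{R}(X^* )=\mathcal{R}(A^k)$. For $m\in\mathbb{N}$, the $m$-weak group inverse is $A^{\mathrm{WG}_m}:=(A^{\mathrm{cEP}})^{m+1}A^m$ and the $m$-weak core inverse is $A^{\#_m}:=A^{\mathrm{WG}_m}P_{A^m}$. *)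

theory Defs
  imports Complex_Main "Jordan_Normal_Form.Matrix"
begin

definition ctrans :: "complex mat \<Rightarrow> complex mat" where
  "ctrans A = mat (dim_col A) (dim_row A) (\<lambda>(i,j). cnj (A $$ (j,i)))"

definition cspace :: "complex mat \<Rightarrow> complex vec set" where
  "cspace A = {A *\<^sub>v x | x. x \<in> carrier_vec (dim_col A)}"

definition mp_inverse :: "complex mat \<Rightarrow> complex mat" where
  "mp_inverse A = (THE X. X \<in> carrier_mat (dim_col A) (dim_row A) \<and>
      A * X * A = A \<and> X * A * X = X \<and>
      ctrans (A * X) = A * X \<and> ctrans (X * A) = X * A)"

definition proj :: "complex mat \<Rightarrow> complex mat" where
  "proj A = A * mp_inverse A"

definition mat_index :: "complex mat \<Rightarrow> nat" where
  "mat_index A = (LEAST k. cspace (A ^\<^sub>m k) = cspace (A ^\<^sub>m (k + 1)))"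

definition core_EP :: "complex mat \<Rightarrow> complex mat" where
  "core_EP A = (THE X. X \<in> carrier_mat (dim_row A) (dim_row A) \<and>
      X * A * X = X \<and>
      cspace X = cspace (A ^\<^sub>m mat_index A) \<and>
      cspace (ctrans X) = cspace (A ^\<^sub>m mat_index A))"

definition m_weak_group :: "nat \<Rightarrow> complex mat \<Rightarrow> complex mat" where
  "m_weak_group m A = (core_EP A) ^\<^sub>m (m + 1) * A ^\<^sub>m m"

definition m_weak_core :: "nat \<Rightarrow> complex mat \<Rightarrow> complex mat" where
  "m_weak_core m A = m_weak_group m A * proj (A ^\<^sub>m m)"

end

theory Submission
  imports Defs "Jordan_Normal_Form.Jordan_Normal_Form_Existence"
begin

lemma sq_mult: "A \<in> carrier_mat n n \<Longrightarrow> B \<in> carrier_mat n n \<Longrightarrow> A * B \<in> carrier_mat n n"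
  by auto
lemma sq_pow: "A \<in> carrier_mat n n \<Longrightarrow> A ^\<^sub>m k \<in> carrier_mat n n"
  by auto
lemma sq_one_r: "(A :: 'a :: semiring_1 mat) \<in> carrier_mat n n \<Longrightarrow> A * 1\<^sub>m n = A"
  by (rule right_mult_one_mat)
lemma sq_one_l: "(A :: 'a :: semiring_1 mat) \<in> carrier_mat n n \<Longrightarrow> 1\<^sub>m n * A = A"
  by (rule left_mult_one_mat)
lemma sq_assoc: "A \<in> carrier_mat n n \<Longrightarrow> B \<in> carrier_mat n n \<Longrightarrow> C \<in> carrier_mat n n \<Longrightarrow> A * B * C = A * (B * C)"
  by (rule assoc_mult_mat)

context fixes n :: nat
begin
declare sq_mult[where n=n, simp] sq_pow[where n=n, simp] sq_assoc[where n=n, simp] sq_one_r[where n=n, simp] sq_one_l[where n=n, simp]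

lemma pow_mat_comm:
  assumes "A \<in> carrier_mat n n"
  shows "A * A ^\<^sub>m k = A ^\<^sub>m k * A"
proof (induct k)
  case 0 then show ?case using assms by simp
next
  case (Suc k)
  have "A * A ^\<^sub>m Suc k = (A * A ^\<^sub>m k) * A" using assms by simp
  also have "\<dots> = A ^\<^sub>m Suc k * A" using Suc by simp
  finally show ?case .
qed

lemma pow_mat_Suc': assumes A: "A \<in> carrier_mat n n" shows "A ^\<^sub>m Suc k = A * A ^\<^sub>m k"
  using pow_mat_comm[OF A, of k] by simp

lemma pow_mat_add: "A \<in> carrier_mat n n \<Longrightarrow> A ^\<^sub>m (i + j) = A ^\<^sub>m i * A ^\<^sub>m j"
proof (induct j)
  case 0 then show ?case by simp
next
  case (Suc j)
  then show ?case by simp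
qed

lemma comm_pow_mat:
  assumes A: "A \<in> carrier_mat n n" and W: "W \<in> carrier_mat n n" and c: "A * W = W * A"
  shows "A ^\<^sub>m k * W = W * A ^\<^sub>m k"
proof (induct k)
  case 0 then show ?case using A W by simp
next
  case (Suc k)
  have "A ^\<^sub>m Suc k * W = A ^\<^sub>m k * (A * W)" using A W by simp
  also have "\<dots> = (A ^\<^sub>m k * W) * A" using A W c by simp
  also have "\<dots> = W * A ^\<^sub>m Suc k" using Suc A W by simp
  finally show ?case .
qed

lemma jb_W:
  fixes a :: complex
  shows "\<exists>W \<in> carrier_mat n n. jordan_block n a * W = W * jordan_block n a \<and>
     (\<forall>s\<ge>n. jordan_block n a ^\<^sub>m s = jordan_block n a ^\<^sub>m (s+1) * W)"
proof (cases "a = 0")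
  case True
  have z: "jordan_block n a ^\<^sub>m s = 0\<^sub>m n n" if "s \<ge> n" for s
    unfolding True jordan_block_zero_pow using that by (intro eq_matI) auto
  show ?thesis
    by (rule bexI[of _ "0\<^sub>m n n"]) (use z in auto)
next
  case False
  let ?J = "jordan_block n a"
  have J: "?J \<in> carrier_mat n n" by simp
  have "det ?J = prod_list (diag_mat ?J)"
    by (rule det_upper_triangular) (auto simp: jordan_block_def)
  also have "diag_mat ?J = replicate n a"
    unfolding diag_mat_def by (intro nth_equalityI) auto
  finally have "det ?J \<noteq> 0" using False by simp
  from det_non_zero_imp_unit[OF jordan_block_carrier this, of "()"]
  obtain W where W: "W \<in> carrier_mat n n" "W * ?J = 1\<^sub>m n" "?J * W = 1\<^sub>m n"
    unfolding Units_def ring_mat_def by auto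
  have "?J ^\<^sub>m s = ?J ^\<^sub>m (s+1) * W" for s
  proof -
    have "?J ^\<^sub>m (s+1) * W = ?J ^\<^sub>m s * (?J * W)" using W J by simp
    then show ?thesis using W J by simp
  qed
  then show ?thesis using W J by (intro bexI[of _ W]) auto
qed
end

lemma four_block_diag_pow:
  assumes A: "A \<in> carrier_mat n1 n1" and D: "D \<in> carrier_mat n2 n2"
  shows "four_block_mat A (0\<^sub>m n1 n2) (0\<^sub>m n2 n1) D ^\<^sub>m k
       = four_block_mat (A ^\<^sub>m k) (0\<^sub>m n1 n2) (0\<^sub>m n2 n1) (D ^\<^sub>m k)"
proof (induct k)
  case 0 then show ?case using A D by simp
next
  case (Suc k)
  show ?case
    apply (simp add: Suc)
    apply (subst mult_four_block_mat[of _ n1 n1 _ n2 _ n2 _ _ n1 _ n2])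
    using A D by auto
qed

lemma jm_W:
  fixes n_as :: "(nat \<times> complex) list"
  defines "N \<equiv> sum_list (map fst n_as)"
  shows "\<exists>W \<in> carrier_mat N N. jordan_matrix n_as * W = W * jordan_matrix n_as \<and>
     (\<forall>s\<ge>N. jordan_matrix n_as ^\<^sub>m s = jordan_matrix n_as ^\<^sub>m (s+1) * W)"
  unfolding N_def
proof (induct n_as)
  case Nil
  show ?case by (rule bexI[of _ "0\<^sub>m 0 0"]) (auto simp: jordan_matrix_def intro!: eq_matI)
next
  case (Cons ba n_as)
  obtain b a where ba: "ba = (b, a)" by force
  let ?N = "sum_list (map fst n_as)"
  let ?J2 = "jordan_matrix n_as"
  let ?B = "jordan_block b a"
  from Cons obtain W2 where W2: "W2 \<in> carrier_mat ?N ?N" "?J2 * W2 = W2 * ?J2"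
    "\<And>s. s \<ge> ?N \<Longrightarrow> ?J2 ^\<^sub>m s = ?J2 ^\<^sub>m (s+1) * W2" by blast
  from jb_W[of b a] obtain W1 where W1: "W1 \<in> carrier_mat b b" "?B * W1 = W1 * ?B"
    "\<And>s. s \<ge> b \<Longrightarrow> ?B ^\<^sub>m s = ?B ^\<^sub>m (s+1) * W1" by blast
  have J2: "?J2 \<in> carrier_mat ?N ?N" by simp
  have B: "?B \<in> carrier_mat b b" by simp
  let ?W = "four_block_mat W1 (0\<^sub>m b ?N) (0\<^sub>m ?N b) W2"
  have J: "jordan_matrix (ba # n_as) = four_block_mat ?B (0\<^sub>m b ?N) (0\<^sub>m ?N b) ?J2"
    unfolding ba jordan_matrix_Cons ..
  have Jp: "jordan_matrix (ba # n_as) ^\<^sub>m s = four_block_mat (?B ^\<^sub>m s) (0\<^sub>m b ?N) (0\<^sub>m ?N b) (?J2 ^\<^sub>m s)" for s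
    unfolding J by (rule four_block_diag_pow[OF B J2])
  have c1: "jordan_matrix (ba # n_as) * ?W = four_block_mat (?B * W1) (0\<^sub>m b ?N) (0\<^sub>m ?N b) (?J2 * W2)"
    unfolding J
    apply (subst mult_four_block_mat[of _ b b _ ?N _ ?N _ _ b _ ?N])
    using W1 W2 by auto
  have c2: "?W * jordan_matrix (ba # n_as) = four_block_mat (W1 * ?B) (0\<^sub>m b ?N) (0\<^sub>m ?N b) (W2 * ?J2)"
    unfolding J
    apply (subst mult_four_block_mat[of _ b b _ ?N _ ?N _ _ b _ ?N])
    using W1 W2 by auto
  have c3: "jordan_matrix (ba # n_as) ^\<^sub>m t * ?W = four_block_mat (?B ^\<^sub>m t * W1) (0\<^sub>m b ?N) (0\<^sub>m ?N b) (?J2 ^\<^sub>m t * W2)" for t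
    apply (subst Jp)
    apply (subst mult_four_block_mat[of _ b b _ ?N _ ?N _ _ b _ ?N])
    using W1 W2 by auto
  show ?case
  proof (rule bexI[of _ ?W], intro conjI allI impI)
    show "?W \<in> carrier_mat (sum_list (map fst (ba # n_as))) (sum_list (map fst (ba # n_as)))"
      using W1 W2 ba by auto
    show "jordan_matrix (ba # n_as) * ?W = ?W * jordan_matrix (ba # n_as)"
      unfolding c1 c2 using W1 W2 by simp
    fix s assume "sum_list (map fst (ba # n_as)) \<le> s"
    then have s: "b \<le> s" "?N \<le> s" using ba by auto
    show "jordan_matrix (ba # n_as) ^\<^sub>m s = jordan_matrix (ba # n_as) ^\<^sub>m (s + 1) * ?W"
      apply (subst c3)
      apply (subst Jp)
      using W1(3)[OF s(1)] W2(3)[OF s(2)] by simp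
  qed
qed

context fixes n :: nat
begin
declare sq_mult[where n=n, simp] sq_pow[where n=n, simp] sq_assoc[where n=n, simp] sq_one_r[where n=n, simp] sq_one_l[where n=n, simp]

lemma K1:
  fixes A :: "complex mat"
  assumes A: "A \<in> carrier_mat n n"
  shows "\<exists>W \<in> carrier_mat n n. A * W = W * A \<and> (\<forall>s\<ge>n. A ^\<^sub>m s = A ^\<^sub>m (s+1) * W)"
proof -
  from char_poly_factorized[OF A] obtain as where "char_poly A = (\<Prod>a\<leftarrow>as. [:- a, 1:])" by blast
  from jordan_nf_exists[OF A this] obtain n_as where "jordan_nf A n_as" by blast
  then obtain P Q where wit: "similar_mat_wit A (jordan_matrix n_as) P Q"
    unfolding jordan_nf_def similar_mat_def by blast
  let ?J = "jordan_matrix n_as"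
  from wit A have P: "P \<in> carrier_mat n n" and Q: "Q \<in> carrier_mat n n" and J: "?J \<in> carrier_mat n n"
    and PQ: "P * Q = 1\<^sub>m n" and QP: "Q * P = 1\<^sub>m n" and AJ: "A = P * ?J * Q"
    unfolding similar_mat_wit_def Let_def by auto
  have N: "sum_list (map fst n_as) = n" using J jordan_matrix_carrier[of n_as] by auto
  from jm_W[of n_as] N obtain W where W: "W \<in> carrier_mat n n" "?J * W = W * ?J"
    "\<And>s. s \<ge> n \<Longrightarrow> ?J ^\<^sub>m s = ?J ^\<^sub>m (s+1) * W" by auto
  have pw: "A ^\<^sub>m k = P * ?J ^\<^sub>m k * Q" for k by (rule similar_mat_wit_pow_id[OF wit])
  let ?W = "P * W * Q"
  show ?thesis
  proof (rule bexI[of _ ?W], intro conjI allI impI)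
    show "?W \<in> carrier_mat n n" using P W Q by auto
    have "A * ?W = P * ?J * (Q * P) * W * Q" using P Q J W AJ by simp
    also have "\<dots> = P * (?J * W) * Q" using P Q J W QP by simp
    also have "\<dots> = P * (W * ?J) * Q" using W by simp
    also have "\<dots> = P * W * (Q * P) * ?J * Q" using P Q J W QP by simp
    also have "\<dots> = ?W * A" using P Q J W AJ by simp
    finally show "A * ?W = ?W * A" .
    fix s assume s: "n \<le> s"
    have "A ^\<^sub>m (s+1) * ?W = P * ?J ^\<^sub>m (s+1) * (Q * P) * W * Q" unfolding pw using P Q J W by simp
    also have "\<dots> = P * (?J ^\<^sub>m (s+1) * W) * Q" using P Q J W QP by simp
    also have "\<dots> = A ^\<^sub>m s" unfolding pw W(3)[OF s, symmetric] using P Q J by simp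
    finally show "A ^\<^sub>m s = A ^\<^sub>m (s + 1) * ?W" by simp
  qed
qed
end


lemma ctrans_dims[simp]: "dim_row (ctrans A) = dim_col A" "dim_col (ctrans A) = dim_row A"
  unfolding ctrans_def by auto

lemma ctrans_index[simp]: "i < dim_col A \<Longrightarrow> j < dim_row A \<Longrightarrow> ctrans A $$ (i,j) = cnj (A $$ (j,i))"
  unfolding ctrans_def by auto

lemma ctrans_carrier[simp]: "A \<in> carrier_mat r c \<Longrightarrow> ctrans A \<in> carrier_mat c r"
  unfolding carrier_mat_def by auto

lemma ctrans_ctrans[simp]: "ctrans (ctrans A) = A"
  by (intro eq_matI) auto

lemma ctrans_mult:
  assumes A: "A \<in> carrier_mat r k" and B: "B \<in> carrier_mat k c"
  shows "ctrans (A * B) = ctrans B * ctrans A"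
proof (intro eq_matI)
  fix i j assume i: "i < dim_row (ctrans B * ctrans A)" and j: "j < dim_col (ctrans B * ctrans A)"
  then have i': "i < c" and j': "j < r" using A B by auto
  have "ctrans (A * B) $$ (i, j) = cnj (\<Sum>l<k. A $$ (j,l) * B $$ (l,i))"
    using A B i' j' by (simp add: scalar_prod_def lessThan_atLeast0)
  also have "\<dots> = (\<Sum>l<k. cnj (B $$ (l,i)) * cnj (A $$ (j,l)))"
    by (simp add: mult.commute)
  also have "\<dots> = (ctrans B * ctrans A) $$ (i, j)"
    using A B i' j' by (simp add: scalar_prod_def lessThan_atLeast0)
  finally show "ctrans (A * B) $$ (i, j) = (ctrans B * ctrans A) $$ (i, j)" .
qed (use A B in auto)

lemma ctrans_one[simp]: "ctrans (1\<^sub>m n) = 1\<^sub>m n"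
  by (intro eq_matI) auto

lemma ctrans_minus:
  assumes A: "A \<in> carrier_mat r c" and B: "B \<in> carrier_mat r c"
  shows "ctrans (A - B) = ctrans A - ctrans B"
  using A B by (intro eq_matI) auto

lemma ctrans_zero_imp:
  fixes E :: "complex mat"
  assumes E: "E \<in> carrier_mat r c" and z: "ctrans E * E = 0\<^sub>m c c"
  shows "E = 0\<^sub>m r c"
proof (intro eq_matI)
  fix i j assume i: "i < dim_row (0\<^sub>m r c :: complex mat)" and j: "j < dim_col (0\<^sub>m r c :: complex mat)"
  then have i': "i < r" and j': "j < c" by auto
  have "(ctrans E * E) $$ (j, j) = (\<Sum>l<r. cnj (E $$ (l,j)) * E $$ (l,j))"
    using E j' by (simp add: scalar_prod_def lessThan_atLeast0)
  also have "\<dots> = (\<Sum>l<r. complex_of_real ((cmod (E $$ (l,j)))\<^sup>2))"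
    by (intro sum.cong refl) (metis complex_norm_square mult.commute of_real_power)
  also have "\<dots> = complex_of_real (\<Sum>l<r. (cmod (E $$ (l,j)))\<^sup>2)" by simp
  finally have "complex_of_real (\<Sum>l<r. (cmod (E $$ (l,j)))\<^sup>2) = 0" using z j' by simp
  then have "(\<Sum>l<r. (cmod (E $$ (l,j)))\<^sup>2) = 0" by (simp only: of_real_eq_0_iff)
  then have "\<forall>l\<in>{..<r}. (cmod (E $$ (l,j)))\<^sup>2 = 0"
    by (subst sum_nonneg_eq_0_iff[symmetric]) auto
  then show "E $$ (i, j) = 0\<^sub>m r c $$ (i, j)" using i' j' by auto
qed (use E in auto)


context fixes n :: nat
begin
declare sq_mult[where n=n, simp] sq_pow[where n=n, simp] sq_assoc[where n=n, simp] sq_one_r[where n=n, simp] sq_one_l[where n=n, simp]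

lemma sq_minus[simp]: "A \<in> carrier_mat n n \<Longrightarrow> B \<in> carrier_mat n n \<Longrightarrow> (A :: 'a :: ab_group_add mat) - B \<in> carrier_mat n n"
  by auto

lemma sq_mm: "A \<in> carrier_mat n n \<Longrightarrow> B \<in> carrier_mat n n \<Longrightarrow> C \<in> carrier_mat n n \<Longrightarrow> (A :: 'a :: ring mat) * (B - C) = A * B - A * C"
  by (rule mult_minus_distrib_mat)

lemma ctm: "A \<in> carrier_mat n n \<Longrightarrow> B \<in> carrier_mat n n \<Longrightarrow> ctrans (A * B) = ctrans B * ctrans A"
  by (rule ctrans_mult)

lemma ct_carr[simp]: "A \<in> carrier_mat n n \<Longrightarrow> ctrans A \<in> carrier_mat n n"
  by simp

lemma diff0: "X \<in> carrier_mat n n \<Longrightarrow> Y \<in> carrier_mat n n \<Longrightarrow> (X :: complex mat) - Y = 0\<^sub>m n n \<Longrightarrow> X = Y"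
proof -
  assume X: "X \<in> carrier_mat n n" and Y: "Y \<in> carrier_mat n n" and d: "X - Y = 0\<^sub>m n n"
  show "X = Y"
  proof (intro eq_matI)
    fix i j assume "i < dim_row Y" "j < dim_col Y"
    then have "(X - Y) $$ (i,j) = 0" using d Y by auto
    then show "X $$ (i,j) = Y $$ (i,j)" using X Y \<open>i < dim_row Y\<close> \<open>j < dim_col Y\<close> by auto
  qed (use X Y in auto)
qed

lemma herm_cancel:
  fixes H M :: "complex mat"
  assumes H: "H \<in> carrier_mat n n" and M: "M \<in> carrier_mat n n" and h: "ctrans H = H"
    and z: "H * H * M = 0\<^sub>m n n"
  shows "H * M = 0\<^sub>m n n"
proof (rule ctrans_zero_imp[of _ n n])
  show "H * M \<in> carrier_mat n n" using H M by simp
  have "ctrans (H * M) * (H * M) = ctrans M * (H * H * M)"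
    using H M h by (simp add: ctm)
  also have "\<dots> = 0\<^sub>m n n" using z M by simp
  finally show "ctrans (H * M) * (H * M) = 0\<^sub>m n n" .
qed

lemma herm_pow_cancel:
  fixes H :: "complex mat"
  assumes H: "H \<in> carrier_mat n n" and h: "ctrans H = H"
  shows "M \<in> carrier_mat n n \<Longrightarrow> H ^\<^sub>m (Suc j) * M = 0\<^sub>m n n \<Longrightarrow> H * M = 0\<^sub>m n n"
proof (induct j arbitrary: M)
  case 0 then show ?case using H by simp
next
  case (Suc j)
  have "H ^\<^sub>m (Suc j) * (H * M) = 0\<^sub>m n n" using Suc.prems H by simp
  then have "H * (H * M) = 0\<^sub>m n n" using Suc.hyps[of "H * M"] Suc.prems H by simp
  then show ?case using herm_cancel[OF H Suc.prems(1) h] H Suc.prems by simp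
qed

lemma one_inverse_herm:
  fixes H :: "complex mat"
  assumes H: "H \<in> carrier_mat n n" and h: "ctrans H = H"
  shows "\<exists>G \<in> carrier_mat n n. H * G * H = H"
proof -
  from K1[OF H] obtain W where W: "W \<in> carrier_mat n n" "H * W = W * H"
    "\<And>s. s \<ge> n \<Longrightarrow> H ^\<^sub>m s = H ^\<^sub>m (s+1) * W" by blast
  let ?M = "1\<^sub>m n - H * W"
  have M: "?M \<in> carrier_mat n n" using H W(1) by simp
  have "H ^\<^sub>m (Suc n) * ?M = H ^\<^sub>m (Suc n) - H ^\<^sub>m (Suc n) * (H * W)"
    using H W(1) by (simp add: sq_mm)
  also have "H ^\<^sub>m (Suc n) * (H * W) = H ^\<^sub>m (Suc n + 1) * W" using H W(1) by simp
  also have "\<dots> = H ^\<^sub>m (Suc n)" using W(3)[of "Suc n"] by simp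
  finally have "H ^\<^sub>m (Suc n) * ?M = 0\<^sub>m n n" using H by simp
  from herm_pow_cancel[OF H h M this] have "H * ?M = 0\<^sub>m n n" .
  then have "H - H * (H * W) = 0\<^sub>m n n" using H W(1) by (simp add: sq_mm)
  then have "H = H * (H * W)" using diff0 H W(1) by simp
  then have "H * W * H = H" using H W(1) by (simp add: W(2)[symmetric])
  then show ?thesis using W by blast
qed


lemma one_three_inverse:
  fixes A :: "complex mat"
  assumes A: "A \<in> carrier_mat n n"
  shows "\<exists>X \<in> carrier_mat n n. A * X * A = A \<and> ctrans (A * X) = A * X"
proof -
  let ?H = "ctrans A * A"
  have H: "?H \<in> carrier_mat n n" using A by simp
  have h: "ctrans ?H = ?H" using A by (simp add: ctm)
  from one_inverse_herm[OF H h] obtain G where G: "G \<in> carrier_mat n n" "?H * G * ?H = ?H" by blast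
  let ?E = "A * G * ?H - A"
  have E: "?E \<in> carrier_mat n n" using A G by simp
  have E2: "?E = A * (G * ?H - 1\<^sub>m n)" using A G by (simp add: sq_mm)
  have "ctrans A * ?E = ?H * G * ?H - ?H" using A G by (simp add: sq_mm)
  also have "\<dots> = 0\<^sub>m n n" using G(2) H by simp
  finally have AE: "ctrans A * ?E = 0\<^sub>m n n" .
  have "ctrans ?E * ?E = ctrans (G * ?H - 1\<^sub>m n) * (ctrans A * ?E)"
    apply (subst (1) E2) using A G E by (simp add: ctm)
  also have "\<dots> = 0\<^sub>m n n" unfolding AE using A G by simp
  finally have "?E = 0\<^sub>m n n" using ctrans_zero_imp[OF E] by simp
  then have AGH: "A * G * ?H = A" using diff0 A G by simp
  let ?X = "G * ctrans A"
  have X: "?X \<in> carrier_mat n n" using A G by simp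
  have AXA: "A * ?X * A = A" using AGH A G by simp
  let ?P = "A * ?X"
  have Pc: "ctrans ?P = A * ctrans G * ctrans A" using A G by (simp add: ctm)
  have "?P * ctrans ?P = (A * ?X * A) * ctrans G * ctrans A" unfolding Pc using A G by simp
  also have "\<dots> = ctrans ?P" unfolding AXA Pc ..
  finally have PP: "?P * ctrans ?P = ctrans ?P" .
  have "?P = ctrans (ctrans ?P)" by simp
  also have "\<dots> = ctrans (?P * ctrans ?P)" unfolding PP ..
  also have "\<dots> = ?P * ctrans ?P" using ctrans_mult[of ?P n n "ctrans ?P" n] A G by simp
  also have "\<dots> = ctrans ?P" by (rule PP)
  finally have "ctrans ?P = ?P" by simp
  then show ?thesis using X AXA by blast
qed

definition is_mp :: "complex mat \<Rightarrow> complex mat \<Rightarrow> bool" where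
  "is_mp A X \<longleftrightarrow> X \<in> carrier_mat n n \<and> A * X * A = A \<and> X * A * X = X \<and>
      ctrans (A * X) = A * X \<and> ctrans (X * A) = X * A"

lemma mp_unique:
  assumes A: "A \<in> carrier_mat n n" and X: "is_mp A X" and Y: "is_mp A Y"
  shows "X = Y"
proof -
  from X have Xc: "X \<in> carrier_mat n n" and X1: "A * X * A = A" and X2: "X * A * X = X"
    and X3: "ctrans (A * X) = A * X" and X4: "ctrans (X * A) = X * A" unfolding is_mp_def by auto
  from Y have Yc: "Y \<in> carrier_mat n n" and Y1: "A * Y * A = A" and Y2: "Y * A * Y = Y"
    and Y3: "ctrans (A * Y) = A * Y" and Y4: "ctrans (Y * A) = Y * A" unfolding is_mp_def by auto
  have "X = X * (A * X)" using X2 A Xc by simp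
  also have "\<dots> = X * ctrans (A * X)" unfolding X3 ..
  also have "\<dots> = X * (ctrans X * ctrans A)" using A Xc by (simp add: ctm)
  also have "ctrans A = ctrans (A * Y * A)" unfolding Y1 ..
  also have "\<dots> = ctrans A * ctrans (A * Y)" using A Yc by (simp add: ctm)
  also have "X * (ctrans X * (ctrans A * ctrans (A * Y))) = X * ctrans (A * X) * (A * Y)"
    unfolding Y3 using A Xc Yc by (simp add: ctm)
  also have "\<dots> = X * A * X * A * Y" unfolding X3 using A Xc Yc by simp
  also have "\<dots> = X * A * Y" using X2 A Xc Yc by simp
  finally have XX: "X = X * A * Y" .
  have "Y = (Y * A) * Y" using Y2 A Yc by simp
  also have "\<dots> = ctrans (Y * A) * Y" unfolding Y4 ..
  also have "\<dots> = ctrans A * ctrans Y * Y" using A Yc by (simp add: ctm)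
  also have "ctrans A = ctrans (A * X * A)" unfolding X1 ..
  also have "\<dots> = ctrans (X * A) * ctrans A" using ctrans_mult[of A n n "X * A" n] A Xc by simp
  also have "ctrans (X * A) * ctrans A * ctrans Y * Y = X * A * ctrans (Y * A) * Y"
    unfolding X4 using A Xc Yc by (simp add: ctm)
  also have "\<dots> = X * A * Y * A * Y" unfolding Y4 using A Xc Yc by simp
  also have "\<dots> = X * A * Y" using Y2 A Xc Yc by simp
  finally show ?thesis using XX by simp
qed

lemma mp_exists:
  fixes A :: "complex mat"
  assumes A: "A \<in> carrier_mat n n"
  shows "\<exists>X. is_mp A X"
proof -
  from one_three_inverse[OF A] obtain X3 where X3: "X3 \<in> carrier_mat n n" "A * X3 * A = A"
    "ctrans (A * X3) = A * X3" by blast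
  have Ac: "ctrans A \<in> carrier_mat n n" using A by simp
  from one_three_inverse[OF Ac] obtain Y where Y: "Y \<in> carrier_mat n n" "ctrans A * Y * ctrans A = ctrans A"
    "ctrans (ctrans A * Y) = ctrans A * Y" by blast
  let ?X4 = "ctrans Y"
  have X4: "?X4 \<in> carrier_mat n n" using Y by simp
  have X4a: "A * ?X4 * A = A"
  proof -
    have "A * ?X4 * A = ctrans (ctrans A * Y * ctrans A)" using A Y(1) by (simp add: ctm)
    also have "\<dots> = A" unfolding Y(2) by simp
    finally show ?thesis .
  qed
  have X4b: "?X4 * A = ctrans A * Y"
  proof -
    have "?X4 * A = ctrans (ctrans A * Y)" using A Y(1) by (simp add: ctm)
    then show ?thesis using Y(3) by simp
  qed
  have X4c: "ctrans (?X4 * A) = ?X4 * A" unfolding X4b using Y(3) by simp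
  let ?X = "?X4 * A * X3"
  show ?thesis unfolding is_mp_def
  proof (intro exI[of _ ?X] conjI)
    show "?X \<in> carrier_mat n n" using X4 A X3 by simp
    show "A * ?X * A = A" using X4a X3 A X4 by simp
    show "?X * A * ?X = ?X"
    proof -
      have "?X * A * ?X = ?X4 * (A * X3 * A) * ?X4 * A * X3" using X4 A X3 by simp
      also have "\<dots> = ?X4 * (A * ?X4 * A) * X3" unfolding X3(2) using X4 A X3 by simp
      also have "\<dots> = ?X" unfolding X4a using X4 A X3 by simp
      finally show ?thesis .
    qed
    have AX: "A * ?X = A * X3"
    proof -
      have "A * ?X = (A * ?X4 * A) * X3" using X4 A X3 by simp
      then show ?thesis unfolding X4a .
    qed
    show "ctrans (A * ?X) = A * ?X" unfolding AX by (rule X3(3))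
    have XA: "?X * A = ?X4 * A"
    proof -
      have "?X * A = ?X4 * (A * X3 * A)" using X4 A X3 by simp
      then show ?thesis unfolding X3(2) .
    qed
    show "ctrans (?X * A) = ?X * A" unfolding XA by (rule X4c)
  qed
qed

lemma mp_inverse_props:
  fixes A :: "complex mat"
  assumes A: "A \<in> carrier_mat n n"
  shows "is_mp A (mp_inverse A)"
proof -
  have d1: "dim_col A = n" and d2: "dim_row A = n" using A by auto
  have eq: "mp_inverse A = (THE X. is_mp A X)"
    unfolding mp_inverse_def is_mp_def d1 d2 ..
  from mp_exists[OF A] obtain X where X: "is_mp A X" by blast
  have "is_mp A (THE X. is_mp A X)"
    by (rule theI[of _ X]) (rule X, rule mp_unique[OF A _ X])
  then show ?thesis unfolding eq .
qed

end

context fixes n :: nat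
begin
declare sq_mult[where n=n, simp] sq_pow[where n=n, simp] sq_assoc[where n=n, simp] sq_one_r[where n=n, simp] sq_one_l[where n=n, simp]
  sq_minus[where n=n, simp] ct_carr[where n=n, simp]

lemma cs_mult:
  assumes A: "A \<in> carrier_mat n n" and B: "B \<in> carrier_mat n n"
  shows "cspace (A * B) \<subseteq> cspace A"
proof
  fix y assume "y \<in> cspace (A * B)"
  then obtain x where x: "x \<in> carrier_vec n" and y: "y = (A * B) *\<^sub>v x"
    unfolding cspace_def using A B by auto
  have "y = A *\<^sub>v (B *\<^sub>v x)" using y A B x by simp
  moreover have "B *\<^sub>v x \<in> carrier_vec (dim_col A)" using A B x by simp
  ultimately show "y \<in> cspace A" unfolding cspace_def by blast
qed

lemma cs_factor:
  assumes X: "X \<in> carrier_mat n n" and Y: "Y \<in> carrier_mat n n" and sub: "cspace X \<subseteq> cspace Y"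
  shows "\<exists>V \<in> carrier_mat n n. X = Y * V"
proof -
  have "\<exists>v. v \<in> carrier_vec n \<and> Y *\<^sub>v v = X *\<^sub>v unit_vec n j" for j
  proof -
    have "X *\<^sub>v unit_vec n j \<in> cspace X" unfolding cspace_def using X by auto
    then have "X *\<^sub>v unit_vec n j \<in> cspace Y" using sub by auto
    then show ?thesis unfolding cspace_def using Y by auto
  qed
  then obtain v where v: "\<And>j. v j \<in> carrier_vec n" "\<And>j. Y *\<^sub>v v j = X *\<^sub>v unit_vec n j"
    by metis
  let ?V = "mat n n (\<lambda>(i,j). v j $ i)"
  have "X = Y * ?V"
  proof (intro eq_matI)
    fix i j assume i: "i < dim_row (Y * ?V)" and j: "j < dim_col (Y * ?V)"
    then have i': "i < n" and j': "j < n" using Y by auto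
    have cV: "col ?V j = v j" using v(1)[of j] j' by (intro eq_vecI) auto
    have "(Y * ?V) $$ (i,j) = row Y i \<bullet> v j" using i' j' Y cV by simp
    also have "\<dots> = (Y *\<^sub>v v j) $ i" using i' Y by simp
    also have "\<dots> = (X *\<^sub>v unit_vec n j) $ i" using v(2) by simp
    also have "\<dots> = X $$ (i,j)" using i' j' X by simp
    finally show "X $$ (i,j) = (Y * ?V) $$ (i,j)" by simp
  qed (use X Y in auto)
  then show ?thesis by (intro bexI[of _ ?V]) auto
qed

lemma index_facts:
  fixes A :: "complex mat"
  assumes A: "A \<in> carrier_mat n n"
  shows "cspace (A ^\<^sub>m mat_index A) = cspace (A ^\<^sub>m (mat_index A + 1))"
    and "\<exists>D \<in> carrier_mat n n. D * A ^\<^sub>m (mat_index A + 1) = A ^\<^sub>m mat_index A"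
proof -
  from K1[OF A] obtain W where W: "W \<in> carrier_mat n n" "A * W = W * A"
    "\<And>s. s \<ge> n \<Longrightarrow> A ^\<^sub>m s = A ^\<^sub>m (s+1) * W" by blast
  have "cspace (A ^\<^sub>m n) = cspace (A ^\<^sub>m (n + 1))"
  proof
    have e: "A ^\<^sub>m n = A ^\<^sub>m (n+1) * W" using W(3)[OF order_refl] .
    show "cspace (A ^\<^sub>m n) \<subseteq> cspace (A ^\<^sub>m (n + 1))"
      unfolding e by (rule cs_mult) (use A W(1) in auto)
    show "cspace (A ^\<^sub>m (n + 1)) \<subseteq> cspace (A ^\<^sub>m n)"
      using cs_mult[of "A ^\<^sub>m n" A] A by simp
  qed
  then have ex: "cspace (A ^\<^sub>m n) = cspace (A ^\<^sub>m (n + 1))" .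
  let ?k = "mat_index A"
  show keq: "cspace (A ^\<^sub>m ?k) = cspace (A ^\<^sub>m (?k + 1))"
    unfolding mat_index_def by (rule LeastI[of _ n]) (rule ex)
  have kn: "?k \<le> n" unfolding mat_index_def by (rule Least_le) (rule ex)
  from cs_factor[OF sq_pow[OF A] sq_pow[OF A] equalityD1[OF keq]] obtain V where
    V: "V \<in> carrier_mat n n" "A ^\<^sub>m ?k = A ^\<^sub>m (?k + 1) * V" by blast
  have exj: "\<exists>Vj \<in> carrier_mat n n. A ^\<^sub>m ?k = A ^\<^sub>m (?k + j) * Vj" for j
  proof (induct j)
    case 0 then show ?case using A by (intro bexI[of _ "1\<^sub>m n"]) auto
  next
    case (Suc j)
    then obtain Vj where Vj: "Vj \<in> carrier_mat n n" "A ^\<^sub>m ?k = A ^\<^sub>m (?k + j) * Vj" by blast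
    have "A ^\<^sub>m (?k + j) = A ^\<^sub>m j * A ^\<^sub>m ?k" using pow_mat_add[OF A, of j ?k] by (simp add: add.commute)
    also have "\<dots> = A ^\<^sub>m j * (A ^\<^sub>m (?k + 1) * V)" by (simp only: V(2)[symmetric])
    also have "\<dots> = A ^\<^sub>m (j + (?k + 1)) * V" using pow_mat_add[OF A, of j "?k+1"] A V(1) by simp
    finally have c: "A ^\<^sub>m (?k + j) = A ^\<^sub>m (j + (?k + 1)) * V" .
    have "A ^\<^sub>m ?k = A ^\<^sub>m (j + (?k + 1)) * V * Vj" using Vj(2) unfolding c .
    then have "A ^\<^sub>m ?k = A ^\<^sub>m (?k + Suc j) * (V * Vj)" using Vj(1) A V(1)
      by (simp add: add.commute add.left_commute)
    then show ?case using V(1) Vj(1) by (intro bexI[of _ "V * Vj"]) auto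
  qed
  have nk: "?k + (n - ?k) = n" using kn by simp
  from exj[of "n - ?k"] obtain V' where V': "V' \<in> carrier_mat n n" "A ^\<^sub>m ?k = A ^\<^sub>m n * V'"
    unfolding nk by blast
  have "W * A ^\<^sub>m (?k + 1) = W * (A * A ^\<^sub>m ?k)" using pow_mat_Suc'[OF A, of ?k] by simp
  also have "\<dots> = W * (A * A ^\<^sub>m n * V')" using V' A by simp
  also have "A * A ^\<^sub>m n = A ^\<^sub>m (n + 1)" using pow_mat_Suc'[OF A, of n] by simp
  also have "W * (A ^\<^sub>m (n + 1) * V') = (A ^\<^sub>m (n + 1) * W) * V'"
    using comm_pow_mat[OF A W(1) W(2), of "n+1"] A W(1) V' by simp
  also have "\<dots> = A ^\<^sub>m ?k" by (simp only: W(3)[OF order_refl, symmetric] V'(2)[symmetric])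
  finally show "\<exists>D \<in> carrier_mat n n. D * A ^\<^sub>m (?k + 1) = A ^\<^sub>m ?k" using W(1) by blast
qed

end

context fixes n :: nat
begin
declare sq_mult[where n=n, simp] sq_pow[where n=n, simp] sq_assoc[where n=n, simp] sq_one_r[where n=n, simp] sq_one_l[where n=n, simp]
  sq_minus[where n=n, simp] ct_carr[where n=n, simp]

definition is_cep :: "complex mat \<Rightarrow> complex mat \<Rightarrow> bool" where
  "is_cep A X \<longleftrightarrow> X \<in> carrier_mat n n \<and> X * A * X = X \<and>
      cspace X = cspace (A ^\<^sub>m mat_index A) \<and> cspace (ctrans X) = cspace (A ^\<^sub>m mat_index A)"

lemma cep_unique:
  assumes A: "A \<in> carrier_mat n n" and X: "is_cep A X" and Y: "is_cep A Y"
  shows "X = Y"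
proof -
  from X have Xc: "X \<in> carrier_mat n n" and X1: "X * A * X = X"
    and X2: "cspace X = cspace (A ^\<^sub>m mat_index A)" and X3: "cspace (ctrans X) = cspace (A ^\<^sub>m mat_index A)"
    unfolding is_cep_def by auto
  from Y have Yc: "Y \<in> carrier_mat n n" and Y1: "Y * A * Y = Y"
    and Y2: "cspace Y = cspace (A ^\<^sub>m mat_index A)" and Y3: "cspace (ctrans Y) = cspace (A ^\<^sub>m mat_index A)"
    unfolding is_cep_def by auto
  from cs_factor[of Y n X] Xc Yc X2 Y2 obtain V where V: "V \<in> carrier_mat n n" "Y = X * V" by auto
  from cs_factor[of "ctrans X" n "ctrans Y"] Xc Yc X3 Y3 obtain U where U: "U \<in> carrier_mat n n"
    "ctrans X = ctrans Y * U" by auto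
  have XU: "X = ctrans U * Y"
  proof -
    have "X = ctrans (ctrans X)" by simp
    also have "\<dots> = ctrans U * Y" unfolding U(2) using ctrans_mult[of "ctrans Y" n n U n] Yc U(1) by simp
    finally show ?thesis .
  qed
  have "X * A * Y = X * A * X * V" unfolding V(2) using Xc A V by simp
  also have "\<dots> = Y" unfolding X1 V(2) ..
  finally have e1: "X * A * Y = Y" .
  have "X * A * Y = ctrans U * (Y * A * Y)" unfolding XU using Yc A U by simp
  also have "\<dots> = X" unfolding Y1 XU ..
  finally show ?thesis using e1 by simp
qed

lemma cep_exists:
  fixes A :: "complex mat"
  assumes A: "A \<in> carrier_mat n n"
  shows "is_cep A (A ^\<^sub>m mat_index A * mp_inverse (A ^\<^sub>m (mat_index A + 1)))"
    and "\<exists>V \<in> carrier_mat n n. A ^\<^sub>m mat_index A = A ^\<^sub>m (mat_index A + 1) * V"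
    and "A ^\<^sub>m (mat_index A + 1) * mp_inverse (A ^\<^sub>m (mat_index A + 1)) * A ^\<^sub>m mat_index A = A ^\<^sub>m mat_index A"
proof -
  let ?k = "mat_index A"
  define K where "K = A ^\<^sub>m ?k"
  define B where "B = A ^\<^sub>m (?k + 1)"
  define Bd where "Bd = mp_inverse B"
  have K: "K \<in> carrier_mat n n" unfolding K_def using A by simp
  have B: "B \<in> carrier_mat n n" unfolding B_def using A by simp
  have BK: "B = A * K" unfolding B_def K_def using pow_mat_Suc'[OF A, of ?k] by simp
  have BK2: "B = K * A" unfolding B_def K_def by simp
  from mp_inverse_props[OF B] have Bd: "Bd \<in> carrier_mat n n" and B1: "B * Bd * B = B"
    and B2: "Bd * B * Bd = Bd" and B3: "ctrans (B * Bd) = B * Bd" and B4: "ctrans (Bd * B) = Bd * B"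
    unfolding is_mp_def Bd_def by auto
  from index_facts(1)[OF A] have keq: "cspace K = cspace B" unfolding K_def B_def .
  from index_facts(2)[OF A] obtain D where D: "D \<in> carrier_mat n n" "D * B = K"
    unfolding K_def B_def by blast
  from cs_factor[of K n B] keq K B obtain V where V: "V \<in> carrier_mat n n" "K = B * V" by auto
  show "\<exists>V \<in> carrier_mat n n. A ^\<^sub>m ?k = A ^\<^sub>m (?k + 1) * V" using V unfolding K_def B_def by blast
  have BBdK: "B * Bd * K = K"
  proof -
    have "B * Bd * K = (B * Bd * B) * V" unfolding V(2) using B Bd V by simp
    also have "\<dots> = K" unfolding B1 V(2) ..
    finally show ?thesis .
  qed
  then show "A ^\<^sub>m (?k + 1) * mp_inverse (A ^\<^sub>m (?k + 1)) * A ^\<^sub>m ?k = A ^\<^sub>m ?k"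
    unfolding K_def B_def Bd_def .
  let ?C = "K * Bd"
  have C: "?C \<in> carrier_mat n n" using K Bd by simp
  have CAC: "?C * A * ?C = ?C"
  proof -
    have "?C * A * ?C = K * (Bd * (A * K) * Bd)" using K Bd A by simp
    also have "\<dots> = ?C" unfolding BK[symmetric] B2 ..
    finally show ?thesis .
  qed
  have cs1: "cspace ?C = cspace K"
  proof
    show "cspace ?C \<subseteq> cspace K" by (rule cs_mult[OF K Bd])
    have "?C * B = D * B * Bd * B" using D(2) by simp
    also have "\<dots> = D * (B * Bd * B)" using D(1) B Bd by simp
    also have "\<dots> = K" unfolding B1 D(2) ..
    finally have eK: "K = ?C * B" by simp
    show "cspace K \<subseteq> cspace ?C"
      by (rule subset_trans[OF equalityD1[OF arg_cong[OF eK, of cspace]] cs_mult[OF C B]])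
  qed
  have cs2: "cspace (ctrans ?C) = cspace K"
  proof
    have cC: "ctrans ?C = ctrans Bd * ctrans K" using ctrans_mult[of K n n Bd n] K Bd by simp
    have "Bd = Bd * (B * Bd)" using B2 B Bd by simp
    also have "B * Bd = ctrans Bd * ctrans B" by (rule trans[OF B3[symmetric] ctrans_mult[OF B Bd]])
    finally have "ctrans Bd = ctrans (Bd * (ctrans Bd * ctrans B))" by simp
    also have "\<dots> = B * Bd * ctrans Bd"
      using ctrans_mult[of Bd n n "ctrans Bd * ctrans B" n] ctrans_mult[of "ctrans Bd" n n "ctrans B" n] B Bd by simp
    finally have cBd: "ctrans Bd = B * Bd * ctrans Bd" .
    have "ctrans ?C = K * (A * (Bd * ctrans Bd * ctrans K))"
      unfolding cC apply (subst cBd) unfolding BK2 using K A Bd by simp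
    then show "cspace (ctrans ?C) \<subseteq> cspace K" using cs_mult[of K n "A * (Bd * ctrans Bd * ctrans K)"] K A Bd by simp
    have e1: "B = ctrans (B * Bd) * B" using B1 B3 by simp
    have e2: "ctrans (B * Bd) = ctrans Bd * ctrans B" using ctrans_mult[of B n n Bd n] B Bd by simp
    have e3: "ctrans B = ctrans K * ctrans A" unfolding BK using ctrans_mult[of A n n K n] A K by simp
    have e4: "ctrans Bd * ctrans B * B = ctrans ?C * (ctrans A * B)" unfolding e3 cC using Bd K A B by simp
    have eB: "B = ctrans ?C * (ctrans A * B)" using e1 unfolding e2 e4 .
    have "K = B * V" by (rule V(2))
    also have "\<dots> = ctrans ?C * (ctrans A * B) * V" by (rule arg_cong[where f="\<lambda>M. M * V", OF eB])
    also have "\<dots> = ctrans ?C * (ctrans A * B * V)" using C A B V(1) by simp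
    finally have eK: "K = ctrans ?C * (ctrans A * B * V)" .
    have cm: "cspace (ctrans ?C * (ctrans A * B * V)) \<subseteq> cspace (ctrans ?C)"
      by (rule cs_mult[where n=n]) (use C A B V(1) in simp_all)
    show "cspace K \<subseteq> cspace (ctrans ?C)"
      by (rule subset_trans[OF equalityD1[OF arg_cong[OF eK, of cspace]] cm])
  qed
  show "is_cep A (A ^\<^sub>m ?k * mp_inverse (A ^\<^sub>m (?k + 1)))"
    unfolding is_cep_def K_def[symmetric] B_def[symmetric] Bd_def[symmetric]
    using C CAC cs1 cs2 by blast
qed

lemma core_EP_eq:
  fixes A :: "complex mat"
  assumes A: "A \<in> carrier_mat n n"
  shows "core_EP A = A ^\<^sub>m mat_index A * mp_inverse (A ^\<^sub>m (mat_index A + 1))"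
proof -
  have d2: "dim_row A = n" using A by auto
  have eq: "core_EP A = (THE X. is_cep A X)"
    unfolding core_EP_def is_cep_def d2 ..
  show ?thesis unfolding eq
    by (rule the_equality) (rule cep_exists(1)[OF A], rule cep_unique[OF A _ cep_exists(1)[OF A]])
qed

end

context fixes n :: nat
begin
declare sq_mult[where n=n, simp] sq_pow[where n=n, simp] sq_assoc[where n=n, simp] sq_one_r[where n=n, simp] sq_one_l[where n=n, simp]
  sq_minus[where n=n, simp] ct_carr[where n=n, simp]

lemma main_thm:
  fixes A :: "complex mat" and m :: nat
  assumes A: "A \<in> carrier_mat n n" and m: "m \<ge> 1"
  shows "(\<exists>X \<in> carrier_mat n n.
            A * X = (core_EP A) ^\<^sub>m m * A ^\<^sub>m m * proj (A ^\<^sub>m m) \<and>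
            cspace X \<subseteq> cspace (A ^\<^sub>m mat_index A))
       \<and> (\<forall>X \<in> carrier_mat n n.
            (A * X = (core_EP A) ^\<^sub>m m * A ^\<^sub>m m * proj (A ^\<^sub>m m) \<and>
             cspace X \<subseteq> cspace (A ^\<^sub>m mat_index A)) \<longleftrightarrow> X = m_weak_core m A)"
proof -
  let ?k = "mat_index A"
  define K where "K = A ^\<^sub>m ?k"
  define B where "B = A ^\<^sub>m (?k + 1)"
  define Bd where "Bd = mp_inverse B"
  define C where "C = core_EP A"
  have K: "K \<in> carrier_mat n n" unfolding K_def using A by simp
  have B: "B \<in> carrier_mat n n" unfolding B_def using A by simp
  have BK: "B = A * K" unfolding B_def K_def using pow_mat_Suc'[OF A, of ?k] by simp
  from mp_inverse_props[OF B] have Bd: "Bd \<in> carrier_mat n n"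
    unfolding is_mp_def Bd_def by auto
  have CKB: "C = K * Bd" unfolding C_def K_def Bd_def B_def by (rule core_EP_eq[OF A])
  have C: "C \<in> carrier_mat n n" unfolding CKB using K Bd by simp
  have BBdK: "B * Bd * K = K" using cep_exists(3)[OF A] unfolding K_def B_def Bd_def .
  from index_facts(2)[OF A] obtain D where D: "D \<in> carrier_mat n n" "D * B = K"
    unfolding K_def B_def by blast
  have ACC: "A * C * C = C"
  proof -
    have "A * C * C = (A * K) * Bd * K * Bd" unfolding CKB using A K Bd by simp
    also have "\<dots> = (B * Bd * K) * Bd" unfolding BK[symmetric] using B Bd K by simp
    also have "\<dots> = C" unfolding BBdK CKB ..
    finally show ?thesis .
  qed
  obtain m' where m': "m = Suc m'" using m by (cases m) auto
  have key: "A * C ^\<^sub>m (m + 1) = C ^\<^sub>m m"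
  proof -
    have "C ^\<^sub>m (m + 1) = C * C ^\<^sub>m m" using pow_mat_Suc'[OF C, of m] by simp
    also have "C ^\<^sub>m m = C * C ^\<^sub>m m'" unfolding m' by (rule pow_mat_Suc'[OF C])
    finally have e: "C ^\<^sub>m (m + 1) = C * (C * C ^\<^sub>m m')" .
    have "A * C ^\<^sub>m (m + 1) = A * (C * (C * C ^\<^sub>m m'))" unfolding e ..
    also have "\<dots> = (A * C * C) * C ^\<^sub>m m'" using A C by simp
    also have "\<dots> = C * C ^\<^sub>m m'" unfolding ACC ..
    also have "\<dots> = C ^\<^sub>m m" unfolding m' by (rule pow_mat_Suc'[OF C, symmetric])
    finally show ?thesis .
  qed
  define P where "P = proj (A ^\<^sub>m m)"
  have Am: "A ^\<^sub>m m \<in> carrier_mat n n" using A by simp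
  from mp_inverse_props[OF Am] have P: "P \<in> carrier_mat n n"
    unfolding is_mp_def P_def proj_def using Am by auto
  define X0 where "X0 = m_weak_core m A"
  have X0eq: "X0 = C ^\<^sub>m (m + 1) * A ^\<^sub>m m * P"
    unfolding X0_def m_weak_core_def m_weak_group_def P_def C_def ..
  have X0c: "X0 \<in> carrier_mat n n" unfolding X0eq using C A P by simp
  have AX0: "A * X0 = C ^\<^sub>m m * A ^\<^sub>m m * P"
  proof -
    have "A * X0 = (A * C ^\<^sub>m (m + 1)) * A ^\<^sub>m m * P" unfolding X0eq using A C P by simp
    also have "\<dots> = C ^\<^sub>m m * A ^\<^sub>m m * P" unfolding key ..
    finally show ?thesis .
  qed
  have csX0: "cspace X0 \<subseteq> cspace K"
  proof -
    have "C ^\<^sub>m (m + 1) = C * C ^\<^sub>m m" using pow_mat_Suc'[OF C, of m] by simp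
    then have "X0 = C * C ^\<^sub>m m * A ^\<^sub>m m * P" unfolding X0eq by (simp only:)
    also have "\<dots> = K * (Bd * C ^\<^sub>m m * A ^\<^sub>m m * P)"
      unfolding CKB using K Bd A P by simp
    finally have "X0 = K * (Bd * C ^\<^sub>m m * A ^\<^sub>m m * P)" .
    then show ?thesis using cs_mult[of K n "Bd * C ^\<^sub>m m * A ^\<^sub>m m * P"] K Bd C A P by simp
  qed
  have uniq: "X = D * (A * X)" if X: "X \<in> carrier_mat n n" and cs: "cspace X \<subseteq> cspace K" for X :: "complex mat"
  proof -
    from cs_factor[of X n K] X K cs obtain Z where Z: "Z \<in> carrier_mat n n" "X = K * Z" by auto
    have "D * (A * X) = (D * (A * K)) * Z" unfolding Z(2) using D A K Z by simp
    also have "\<dots> = X" unfolding BK[symmetric] D(2) Z(2) ..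
    finally show ?thesis by simp
  qed
  show ?thesis
    unfolding K_def[symmetric] C_def[symmetric] P_def[symmetric] X0_def[symmetric]
  proof (intro conjI ballI)
    show "\<exists>X\<in>carrier_mat n n. A * X = C ^\<^sub>m m * A ^\<^sub>m m * P \<and> cspace X \<subseteq> cspace K"
      using X0c AX0 csX0 by blast
    fix X :: "complex mat" assume X: "X \<in> carrier_mat n n"
    show "(A * X = C ^\<^sub>m m * A ^\<^sub>m m * P \<and> cspace X \<subseteq> cspace K) = (X = X0)"
    proof
      assume h: "A * X = C ^\<^sub>m m * A ^\<^sub>m m * P \<and> cspace X \<subseteq> cspace K"
      have "X = D * (A * X)" using uniq X h by blast
      also have "\<dots> = D * (A * X0)" using h AX0 by simp
      also have "\<dots> = X0" by (rule uniq[OF X0c csX0, symmetric])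
      finally show "X = X0" .
    next
      assume "X = X0"
      then show "A * X = C ^\<^sub>m m * A ^\<^sub>m m * P \<and> cspace X \<subseteq> cspace K" using AX0 csX0 by simp
    qed
  qed
qed

end

theorem theorem4p10:
  fixes A :: "complex mat" and n m k :: nat
  assumes "A \<in> carrier_mat n n"
    and "mat_index A = k"
    and "m \<ge> 1"
  shows "(\<exists>X \<in> carrier_mat n n.
            A * X = (core_EP A) ^\<^sub>m m * A ^\<^sub>m m * proj (A ^\<^sub>m m) \<and>
            cspace X \<subseteq> cspace (A ^\<^sub>m k))
       \<and> (\<forall>X \<in> carrier_mat n n.
            (A * X = (core_EP A) ^\<^sub>m m * A ^\<^sub>m m * proj (A ^\<^sub>m m) \<and>
             cspace X \<subseteq> cspace (A ^\<^sub>m k)) \<longleftrightarrow> X = m_weak_core m A)"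
  using main_thm[OF assms(1) assms(3)] unfolding assms(2)[symmetric] .

end
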